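(* In any iteration of Algorithm 1, if there exist an integer $m\ge1$ and an index $j\in\{1,\dots,n\}$ such that $i^*=b^m(j)$, then $\mathrm{avg}(j,b(i^* ))<\mathrm{avg}(j,i^* )$.
   Context: Problem (P): given an integer $n\ge1$, reals $0<q_1\le\cdots\le q_n$, $z_1,\dots,z_n>0$ and $K>0$, maximize $\sum_{i=1}^n x_i$ subject to $0\le x_i\le q_i$, $0\le x_1\le\cdots\le x_n$, $\sum_{i=1}^n z_ix_i\le K$. For $1\le i<j\le n+1$ let $\mathrm{sum}(i,j)=z_i+\cdots+z_{j-1}$ and $\mathrm{avg}(i,j)=\mathrm{sum}(i,j)/(j-i)$. Algorithm 1 (run on an instance of (P)): Initialize $S=\{0,n+1\}$, $y_i=\mathrm{avg}(i,n+1)$ and $x_i=0$ for $i=1,\dots,n$, and $\hat B=K$. While $\hat B>0$ and $S\ne\{0,1,\dots,n+1\}$, perform an iteration: let $i^*$ be the index $i\in\{1,\dots,n\}\setminus S$ minimizing $y_i$, ties broken in favour of the smallest index; let $i_L=\max\{j\in S:j<i^*\}$ and $i_R=\min\{j\in S:j>i^*\}$; set $d=\min\{\hat B/((i_R-i^* )y_{i^*}),\ q_{i^*}-x_{i^*}\}$; set $\hat B\leftarrow\hat B-d(i_R-i^* )y_{i^*}$; set $x_i\leftarrow x_i+d$ for all $i^*\le i<i_R$; set $y_i\leftarrow\mathrm{avg}(i,i^* )$ for all $i_L<i<i^*$; add $i^*$ to $S$. Finally output $x_1,\dots,x_n$. Blocker: for $1\le i\le n$, $b(i)$ is the value of $i^*$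 in the last iteration in which $y_i$ is updated (i.e. the last iteration with $i_L<i<i^*$); if $y_i$ is never updated, $b(i)=n+1$. Iterates: $b^0$ is the identity and $b^m(i)=b(b^{m-1}(i))$ (defined as long as $b^{m-1}(i)\le n$). *)

theory Defs
  imports Complex_Main
begin

definition zsum :: "(nat \<Rightarrow> real) \<Rightarrow> nat \<Rightarrow> nat \<Rightarrow> real" where
  "zsum z i j = (\<Sum>k\<in>{i..<j}. z k)"

definition avg :: "(nat \<Rightarrow> real) \<Rightarrow> nat \<Rightarrow> nat \<Rightarrow> real" where
  "avg z i j = zsum z i j / (real j - real i)"

record alg_state =
  stS :: "nat set"
  stY :: "nat \<Rightarrow> real"
  stX :: "nat \<Rightarrow> real"
  stB :: real

definition alg_init :: "nat \<Rightarrow> (nat \<Rightarrow> real) \<Rightarrow> real \<Rightarrow> alg_state" where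
  "alg_init n z K = \<lparr> stS = {0, n+1}, stY = (\<lambda>i. avg z i (n+1)), stX = (\<lambda>i. 0), stB = K \<rparr>"

definition alg_running :: "nat \<Rightarrow> alg_state \<Rightarrow> bool" where
  "alg_running n s \<longleftrightarrow> stB s > 0 \<and> stS s \<noteq> {0..n+1}"

definition istar :: "nat \<Rightarrow> alg_state \<Rightarrow> nat" where
  "istar n s = (LEAST i. i \<in> {1..n} - stS s \<and> (\<forall>k\<in>{1..n} - stS s. stY s i \<le> stY s k))"

definition iLeft :: "nat \<Rightarrow> alg_state \<Rightarrow> nat" where
  "iLeft n s = Max {j\<in>stS s. j < istar n s}"

definition iRight :: "nat \<Rightarrow> alg_state \<Rightarrow> nat" where
  "iRight n s = Min {j\<in>stS s. j > istar n s}"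

definition alg_step :: "nat \<Rightarrow> (nat \<Rightarrow> real) \<Rightarrow> (nat \<Rightarrow> real) \<Rightarrow> alg_state \<Rightarrow> alg_state" where
  "alg_step n q z s =
    (let i = istar n s; iL = iLeft n s; iR = iRight n s;
         d = min (stB s / (real (iR - i) * stY s i)) (q i - stX s i)
     in \<lparr> stS = insert i (stS s),
          stY = (\<lambda>k. if iL < k \<and> k < i then avg z k i else stY s k),
          stX = (\<lambda>k. if i \<le> k \<and> k < iR then stX s k + d else stX s k),
          stB = stB s - d * real (iR - i) * stY s i \<rparr>)"

text \<open>State before iteration k (iterations numbered 0,1,2,...).\<close>
definition alg_st :: "nat \<Rightarrow> (nat \<Rightarrow> real) \<Rightarrow> (nat \<Rightarrow> real) \<Rightarrow> real \<Rightarrow> nat \<Rightarrow> alg_state" where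
  "alg_st n q z K k = (alg_step n q z ^^ k) (alg_init n z K)"

definition performed :: "nat \<Rightarrow> (nat \<Rightarrow> real) \<Rightarrow> (nat \<Rightarrow> real) \<Rightarrow> real \<Rightarrow> nat \<Rightarrow> bool" where
  "performed n q z K k \<longleftrightarrow> (\<forall>l\<le>k. alg_running n (alg_st n q z K l))"

definition upd_iters :: "nat \<Rightarrow> (nat \<Rightarrow> real) \<Rightarrow> (nat \<Rightarrow> real) \<Rightarrow> real \<Rightarrow> nat \<Rightarrow> nat set" where
  "upd_iters n q z K i = {k. performed n q z K k \<and>
      iLeft n (alg_st n q z K k) < i \<and> i < istar n (alg_st n q z K k)}"

definition blocker :: "nat \<Rightarrow> (nat \<Rightarrow> real) \<Rightarrow> (nat \<Rightarrow> real) \<Rightarrow> real \<Rightarrow> nat \<Rightarrow> nat" where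
  "blocker n q z K i =
    (if upd_iters n q z K i = {} then n + 1
     else istar n (alg_st n q z K (Max (upd_iters n q z K i))))"

end

theory Submission
  imports Defs
begin


lemma avg_split:
  fixes a b c :: nat
  assumes "a < b" "b < c"
  shows "avg z a c * (real c - real a) = avg z a b * (real b - real a) + avg z b c * (real c - real b)"
proof -
  have "zsum z a c = zsum z a b + zsum z b c"
    unfolding zsum_def using sum.atLeastLessThan_concat[of a b c z] assms by simp
  moreover have "avg z a c * (real c - real a) = zsum z a c"
    "avg z a b * (real b - real a) = zsum z a b" "avg z b c * (real c - real b) = zsum z b c"
    using assms by (auto simp: avg_def)
  ultimately show ?thesis by simp
qed

lemma avg_mix_gt:
  fixes a b c :: nat
  assumes "a < b" "b < c" "avg z a b > v" "avg z b c > v"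
  shows "avg z a c > v"
proof -
  have h: "avg z a c * (real c - real a) = avg z a b * (real b - real a) + avg z b c * (real c - real b)"
    using avg_split assms by blast
  have p: "real b - real a > 0" "real c - real b > 0" using assms by auto
  have "avg z a b * (real b - real a) > v * (real b - real a)" using p assms by simp
  moreover have "avg z b c * (real c - real b) > v * (real c - real b)" using p assms by simp
  ultimately have "avg z a c * (real c - real a) > v * (real c - real a)" using h by argo
  then show ?thesis using p by (smt (verit) mult_le_cancel_right)
qed

lemma avg_left_ge:
  fixes a b c :: nat
  assumes "a < b" "b < c" "avg z a c \<ge> avg z b c"
  shows "avg z a b \<ge> avg z b c"
proof -
  have h: "avg z a c * (real c - real a) = avg z a b * (real b - real a) + avg z b c * (real c - real b)"
    using avg_split assms by blast
  have p: "real b - real a > 0" "real c - real b > 0" using assms by auto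
  have "avg z a c * (real c - real a) \<ge> avg z b c * (real c - real a)"
    using assms p by (intro mult_right_mono) auto
  then have "avg z a b * (real b - real a) \<ge> avg z b c * (real b - real a)"
    using h by (simp add: algebra_simps)
  then show ?thesis using p by simp
qed

lemma avg_left_gt:
  fixes a b c :: nat
  assumes "a < b" "b < c" "avg z a c > avg z b c"
  shows "avg z a b > avg z b c"
proof -
  have h: "avg z a c * (real c - real a) = avg z a b * (real b - real a) + avg z b c * (real c - real b)"
    using avg_split assms by blast
  have p: "real b - real a > 0" "real c - real b > 0" using assms by auto
  have "avg z a c * (real c - real a) > avg z b c * (real c - real a)"
    using assms p by simp
  then have "avg z a b * (real b - real a) > avg z b c * (real b - real a)"
    using h by (simp add: algebra_simps)
  then show ?thesis using p by simp
qed

lemma avg_right_lt: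
  fixes a b c :: nat
  assumes "a < b" "b < c" "avg z b c < avg z a b"
  shows "avg z a c < avg z a b"
proof -
  have h: "avg z a c * (real c - real a) = avg z a b * (real b - real a) + avg z b c * (real c - real b)"
    using avg_split assms by blast
  have p: "real b - real a > 0" "real c - real b > 0" using assms by auto
  have "avg z b c * (real c - real b) < avg z a b * (real c - real b)" using assms p by simp
  then have "avg z a c * (real c - real a) < avg z a b * (real c - real a)"
    using h by (simp add: algebra_simps)
  then show ?thesis using p by simp
qed


definition basic :: "nat \<Rightarrow> alg_state \<Rightarrow> bool" where
  "basic n s \<longleftrightarrow> stS s \<subseteq> {0..n+1} \<and> 0 \<in> stS s \<and> n+1 \<in> stS s"

definition Rn :: "alg_state \<Rightarrow> nat \<Rightarrow> nat" where
  "Rn s i = Min {x \<in> stS s. i < x}"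

lemma basic_fin: "basic n s \<Longrightarrow> finite (stS s)"
  unfolding basic_def using finite_subset by blast

lemma istar_facts:
  assumes b: "basic n s" and ne: "stS s \<noteq> {0..n+1}"
  shows "istar n s \<in> {1..n} - stS s"
    and "\<forall>k\<in>{1..n} - stS s. stY s (istar n s) \<le> stY s k"
    and "\<forall>k\<in>{1..n} - stS s. k < istar n s \<longrightarrow> stY s (istar n s) < stY s k"
proof -
  define A where "A = {1..n} - stS s"
  define P where "P i \<longleftrightarrow> i \<in> A \<and> (\<forall>k\<in>A. stY s i \<le> stY s k)" for i
  have "A \<noteq> {}"
  proof -
    obtain x where "x \<in> {0..n+1}" "x \<notin> stS s" using ne b unfolding basic_def by blast
    then have "x \<in> A" using b unfolding basic_def A_def by (cases "x = 0"; cases "x = n+1") auto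
    then show ?thesis by blast
  qed
  moreover have "finite A" unfolding A_def by simp
  ultimately have "Min (stY s ` A) \<in> stY s ` A" by simp
  then obtain i0 where i0: "i0 \<in> A" "stY s i0 = Min (stY s ` A)" by auto
  have "P i0" unfolding P_def using i0 \<open>finite A\<close> by auto
  have lst: "istar n s = (LEAST i. P i)" unfolding istar_def P_def A_def by simp
  have Pi: "P (istar n s)" unfolding lst by (rule LeastI[of P i0, OF \<open>P i0\<close>])
  then show "istar n s \<in> {1..n} - stS s" "\<forall>k\<in>{1..n} - stS s. stY s (istar n s) \<le> stY s k"
    unfolding P_def A_def by auto
  show "\<forall>k\<in>{1..n} - stS s. k < istar n s \<longrightarrow> stY s (istar n s) < stY s k"
  proof (intro ballI impI)
    fix k assume k: "k \<in> {1..n} - stS s" "k < istar n s"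
    show "stY s (istar n s) < stY s k"
    proof (rule ccontr)
      assume "\<not> ?thesis"
      then have "P k" using Pi k unfolding P_def A_def by force
      then have "istar n s \<le> k" unfolding lst by (rule Least_le)
      then show False using k by simp
    qed
  qed
qed

lemma iLeft_facts:
  assumes b: "basic n s" and ne: "stS s \<noteq> {0..n+1}"
  shows "iLeft n s \<in> stS s" "iLeft n s < istar n s" "\<forall>x\<in>stS s. x < istar n s \<longrightarrow> x \<le> iLeft n s"
proof -
  have i: "istar n s \<ge> 1" using istar_facts(1)[OF b ne] by auto
  have f: "finite {j\<in>stS s. j < istar n s}" using basic_fin[OF b] by simp
  have "0 \<in> {j\<in>stS s. j < istar n s}" using b i unfolding basic_def by auto
  then have ne2: "{j\<in>stS s. j < istar n s} \<noteq> {}" by blast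
  have "Max {j\<in>stS s. j < istar n s} \<in> {j\<in>stS s. j < istar n s}" using Max_in[OF f ne2] .
  then show "iLeft n s \<in> stS s" "iLeft n s < istar n s" unfolding iLeft_def by auto
  show "\<forall>x\<in>stS s. x < istar n s \<longrightarrow> x \<le> iLeft n s" unfolding iLeft_def using f by auto
qed

lemma iRight_facts:
  assumes b: "basic n s" and ne: "stS s \<noteq> {0..n+1}"
  shows "iRight n s \<in> stS s" "istar n s < iRight n s" "\<forall>x\<in>stS s. istar n s < x \<longrightarrow> iRight n s \<le> x"
    "iRight n s = Rn s (istar n s)"
proof -
  have i: "istar n s \<le> n" using istar_facts(1)[OF b ne] by auto
  have f: "finite {j\<in>stS s. istar n s < j}" using basic_fin[OF b] by simp
  have "n+1 \<in> {j\<in>stS s. istar n s < j}" using b i unfolding basic_def by auto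
  then have ne2: "{j\<in>stS s. istar n s < j} \<noteq> {}" by blast
  have "Min {j\<in>stS s. istar n s < j} \<in> {j\<in>stS s. istar n s < j}" using Min_in[OF f ne2] .
  then show "iRight n s \<in> stS s" "istar n s < iRight n s" unfolding iRight_def by auto
  show "\<forall>x\<in>stS s. istar n s < x \<longrightarrow> iRight n s \<le> x" unfolding iRight_def using f by auto
  show "iRight n s = Rn s (istar n s)" unfolding iRight_def Rn_def by simp
qed

lemma Rn_facts:
  assumes b: "basic n s" and i: "i \<le> n"
  shows "Rn s i \<in> stS s" "i < Rn s i" "\<forall>x\<in>stS s. i < x \<longrightarrow> Rn s i \<le> x"
proof -
  have f: "finite {j\<in>stS s. i < j}" using basic_fin[OF b] by simp
  have "n+1 \<in> {j\<in>stS s. i < j}" using b i unfolding basic_def by auto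
  then have ne2: "{j\<in>stS s. i < j} \<noteq> {}" by blast
  have "Min {j\<in>stS s. i < j} \<in> {j\<in>stS s. i < j}" using Min_in[OF f ne2] .
  then show "Rn s i \<in> stS s" "i < Rn s i" unfolding Rn_def by auto
  show "\<forall>x\<in>stS s. i < x \<longrightarrow> Rn s i \<le> x" unfolding Rn_def using f by auto
qed

lemma Rn_mid:
  assumes b: "basic n s" and ne: "stS s \<noteq> {0..n+1}"
    and i: "iLeft n s < i" "i < istar n s"
  shows "Rn s i = iRight n s"
  unfolding Rn_def
proof (rule Min_eqI)
  show "finite {x \<in> stS s. i < x}" using basic_fin[OF b] by simp
  show "iRight n s \<in> {x \<in> stS s. i < x}" using iRight_facts[OF b ne] i by auto
  fix y assume y: "y \<in> {x \<in> stS s. i < x}"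
  have "\<not> y < istar n s" using iLeft_facts[OF b ne] y i by force
  moreover have "y \<noteq> istar n s" using istar_facts(1)[OF b ne] y by auto
  ultimately show "iRight n s \<le> y" using iRight_facts(3)[OF b ne] y by auto
qed

lemma step_S: "stS (alg_step n q z s) = insert (istar n s) (stS s)"
  by (simp add: alg_step_def Let_def)

lemma step_Y: "stY (alg_step n q z s) i =
   (if iLeft n s < i \<and> i < istar n s then avg z i (istar n s) else stY s i)"
  by (simp add: alg_step_def Let_def)

lemma step_basic:
  assumes b: "basic n s" and ne: "stS s \<noteq> {0..n+1}"
  shows "basic n (alg_step n q z s)"
  using b istar_facts(1)[OF b ne] unfolding basic_def step_S by auto

lemma Rn_step:
  assumes b: "basic n s" and ne: "stS s \<noteq> {0..n+1}"
    and i: "i \<le> n" "i \<notin> stS s" "i \<noteq> istar n s"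
  shows "Rn (alg_step n q z s) i = (if iLeft n s < i \<and> i < istar n s then istar n s else Rn s i)"
proof -
  have fin: "finite {x \<in> insert (istar n s) (stS s). i < x}" using basic_fin[OF b] by simp
  show ?thesis
  proof (cases "iLeft n s < i \<and> i < istar n s")
    case True
    have "Min {x \<in> insert (istar n s) (stS s). i < x} = istar n s"
    proof (rule Min_eqI[OF fin])
      show "istar n s \<in> {x \<in> insert (istar n s) (stS s). i < x}" using True by auto
      fix y assume y: "y \<in> {x \<in> insert (istar n s) (stS s). i < x}"
      show "istar n s \<le> y"
      proof (rule ccontr)
        assume "\<not> ?thesis"
        then have "y \<in> stS s" "y < istar n s" using y by auto
        then show False using iLeft_facts(3)[OF b ne] True y by force
      qed
    qed
    then show ?thesis unfolding Rn_def step_S if_P[OF True] .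
  next
    case False
    have "Min {x \<in> insert (istar n s) (stS s). i < x} = Rn s i"
    proof (rule Min_eqI[OF fin])
      show "Rn s i \<in> {x \<in> insert (istar n s) (stS s). i < x}" using Rn_facts[OF b i(1)] by auto
      fix y assume y: "y \<in> {x \<in> insert (istar n s) (stS s). i < x}"
      show "Rn s i \<le> y"
      proof (cases "y = istar n s")
        case True
        then have "i \<le> iLeft n s" using False y by auto
        then have "i < iLeft n s" using iLeft_facts(1)[OF b ne] i by (cases "i = iLeft n s") auto
        then have "Rn s i \<le> iLeft n s" using Rn_facts(3)[OF b i(1)] iLeft_facts(1)[OF b ne] by auto
        then show ?thesis using True iLeft_facts(2)[OF b ne] by simp
      next
        case False
        then show ?thesis using y Rn_facts(3)[OF b i(1)] by auto
      qed
    qed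
    then show ?thesis unfolding Rn_def step_S if_not_P[OF False] .
  qed
qed


locale alg =
  fixes n :: nat and q z :: "nat \<Rightarrow> real" and K :: real
begin

abbreviation st where "st t \<equiv> alg_st n q z K t"

lemma st_Suc: "st (Suc t) = alg_step n q z (st t)"
  by (simp add: alg_st_def)

lemma st_0: "st 0 = alg_init n z K"
  by (simp add: alg_st_def)

definition reach :: "nat \<Rightarrow> bool" where
  "reach t \<longleftrightarrow> (\<forall>l<t. alg_running n (st l))"

abbreviation upd :: "nat \<Rightarrow> nat \<Rightarrow> bool" where
  "upd u i \<equiv> iLeft n (st u) < i \<and> i < istar n (st u)"

definition U :: "nat \<Rightarrow> nat \<Rightarrow> nat set" where
  "U t i = {u. u < t \<and> upd u i}"

definition Bt :: "nat \<Rightarrow> nat \<Rightarrow> nat" where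
  "Bt t i = (if U t i = {} then n+1 else istar n (st (Max (U t i))))"

abbreviation c :: "nat \<Rightarrow> real" where
  "c t \<equiv> stY (st t) (istar n (st t))"

definition Inv :: "nat \<Rightarrow> bool" where
  "Inv t \<longleftrightarrow> basic n (st t) \<and> card (stS (st t)) = t+2 \<and>
     (\<forall>i\<in>{1..n} - stS (st t). stY (st t) i = avg z i (Rn (st t) i) \<and> Rn (st t) i = Bt t i \<and>
        (\<forall>t'<t. c t' \<le> stY (st t) i))"

lemma Inv_at:
  assumes "Inv t" "i \<in> {1..n} - stS (st t)"
  shows "stY (st t) i = avg z i (Rn (st t) i)" "Rn (st t) i = Bt t i" "\<forall>t'<t. c t' \<le> stY (st t) i"
proof -
  have A: "\<forall>i\<in>{1..n} - stS (st t). stY (st t) i = avg z i (Rn (st t) i) \<and> Rn (st t) i = Bt t i \<and> (\<forall>t'<t. c t' \<le> stY (st t) i)"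
    using assms(1) unfolding Inv_def by blast
  show "stY (st t) i = avg z i (Rn (st t) i)" "Rn (st t) i = Bt t i" "\<forall>t'<t. c t' \<le> stY (st t) i"
    using bspec[OF A assms(2)] by blast+
qed

lemma reach_Suc: "reach (Suc t) \<longleftrightarrow> reach t \<and> alg_running n (st t)"
  unfolding reach_def using less_Suc_eq by auto

lemma Inv_all: "reach t \<Longrightarrow> Inv t"
proof (induction t)
  case 0
  have S0: "stS (st 0) = {0, n+1}" "stY (st 0) = (\<lambda>i. avg z i (n+1))"
    by (simp_all add: st_0 alg_init_def)
  have R0: "Rn (st 0) i = n+1" if "i \<in> {1..n}" for i
  proof -
    have "{x \<in> stS (st 0). i < x} = {n+1}" using that S0 by auto
    then show ?thesis unfolding Rn_def by simp
  qed
  have "U 0 i = {}" for i unfolding U_def by simp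
  then have "Bt 0 i = n+1" for i unfolding Bt_def by simp
  then show ?case unfolding Inv_def basic_def using S0 R0 by auto
next
  case (Suc t)
  have rt: "reach t" and run: "alg_running n (st t)" using Suc.prems reach_Suc by auto
  have IH: "Inv t" using Suc.IH rt .
  define s where "s = st t"
  have b: "basic n s" using IH unfolding Inv_def s_def by simp
  have ne: "stS s \<noteq> {0..n+1}" using run unfolding alg_running_def s_def by simp
  have ss: "st (Suc t) = alg_step n q z s" unfolding s_def st_Suc ..
  have istin: "istar n s \<in> {1..n} - stS s" using istar_facts(1)[OF b ne] .
  have card: "card (stS (st (Suc t))) = Suc t + 2"
    using IH istin basic_fin[OF b] unfolding ss step_S Inv_def s_def by simp
  have bas: "basic n (st (Suc t))" unfolding ss using step_basic[OF b ne] .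
  have Ut: "U (Suc t) i = (if upd t i then insert t (U t i) else U t i)" for i
    unfolding U_def using less_Suc_eq by auto
  have finU: "finite (U t i)" for i unfolding U_def by simp
  have Bstep: "Bt (Suc t) i = (if upd t i then istar n s else Bt t i)" for i
  proof (cases "upd t i")
    case True
    have "Max (insert t (U t i)) = t"
      using finU[of i] by (intro Max_eqI) (auto simp: U_def)
    then show ?thesis using True unfolding Bt_def Ut s_def by simp
  next
    case False
    show ?thesis unfolding Bt_def Ut if_not_P[OF False] by (rule refl)
  qed
  have main: "stY (st (Suc t)) i = avg z i (Rn (st (Suc t)) i) \<and> Rn (st (Suc t)) i = Bt (Suc t) i \<and>
        (\<forall>t'<Suc t. c t' \<le> stY (st (Suc t)) i)" if i: "i \<in> {1..n} - stS (st (Suc t))" for i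
  proof -
    have i1: "i \<le> n" "i \<notin> stS s" "i \<noteq> istar n s" "i \<in> {1..n} - stS s"
      using i unfolding ss step_S by auto
    have IHi: "stY s i = avg z i (Rn s i)" "Rn s i = Bt t i" "\<forall>t'<t. c t' \<le> stY s i"
    proof -
      have A: "\<forall>i\<in>{1..n} - stS s. stY s i = avg z i (Rn s i) \<and> Rn s i = Bt t i \<and> (\<forall>t'<t. c t' \<le> stY s i)"
        using IH unfolding Inv_def s_def by blast
      show "stY s i = avg z i (Rn s i)" "Rn s i = Bt t i" "\<forall>t'<t. c t' \<le> stY s i"
        using bspec[OF A i1(4)] by blast+
    qed
    have IHst: "\<forall>t'<t. c t' \<le> c t"
      using Inv_at(3)[OF IH istin[unfolded s_def]] unfolding s_def by blast
    have Rs: "Rn (st (Suc t)) i = (if upd t i then istar n s else Rn s i)"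
      unfolding ss s_def[symmetric] using Rn_step[OF b ne i1(1-3)] .
    have Ys: "stY (st (Suc t)) i = (if upd t i then avg z i (istar n s) else stY s i)"
      unfolding ss s_def[symmetric] using step_Y .
    have cmin: "c t \<le> stY s i" using istar_facts(2)[OF b ne] i1(4) unfolding s_def by auto
    show ?thesis
    proof (cases "upd t i")
      case True
      have u: "iLeft n s < i" "i < istar n s" using True unfolding s_def by auto
      have r1: "Rn s i = iRight n s" using Rn_mid[OF b ne u] .
      have r2: "c t = avg z (istar n s) (iRight n s)"
        using Inv_at(1)[OF IH istin[unfolded s_def]] iRight_facts(4)[OF b ne] unfolding s_def by simp
      have "avg z i (iRight n s) \<ge> avg z (istar n s) (iRight n s)"
        using cmin IHi(1) r1 r2 by simp
      then have "avg z i (istar n s) \<ge> avg z (istar n s) (iRight n s)"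
        using avg_left_ge[OF u(2) iRight_facts(2)[OF b ne]] by blast
      then have ct: "c t \<le> avg z i (istar n s)" using r2 by simp
      have "\<forall>t'<Suc t. c t' \<le> avg z i (istar n s)"
        using ct IHst less_Suc_eq by (metis order_trans)
      then show ?thesis using Rs[unfolded if_P[OF True]] Ys[unfolded if_P[OF True]]
        Bstep[of i, unfolded if_P[OF True]] by simp
    next
      case False
      have "\<forall>t'<Suc t. c t' \<le> stY s i"
        using cmin IHi(3) less_Suc_eq by auto
      then show ?thesis using Rs[unfolded if_not_P[OF False]] Ys[unfolded if_not_P[OF False]]
        Bstep[of i, unfolded if_not_P[OF False]] IHi by simp
    qed
  qed
  show ?case unfolding Inv_def using bas card main by blast
qed

end


context alg
begin

lemma perf_reach: "performed n q z K t = reach (Suc t)"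
  unfolding performed_def reach_def using less_Suc_eq_le by blast

lemma reach_mono: "reach t \<Longrightarrow> u \<le> t \<Longrightarrow> reach u"
  unfolding reach_def by auto

lemma perf_down: "performed n q z K t \<Longrightarrow> u \<le> t \<Longrightarrow> performed n q z K u"
  unfolding performed_def by auto

lemma perf_basic:
  assumes "performed n q z K u"
  shows "basic n (st u)" "stS (st u) \<noteq> {0..n+1}" "Inv u"
proof -
  have r: "reach (Suc u)" using assms perf_reach by simp
  then have "reach u" "alg_running n (st u)" using reach_Suc by auto
  then show I: "Inv u" using Inv_all by blast
  then show "basic n (st u)" unfolding Inv_def by blast
  show "stS (st u) \<noteq> {0..n+1}" using \<open>alg_running n (st u)\<close> unfolding alg_running_def by blast
qed

lemma perf_bound:
  assumes "performed n q z K t"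
  shows "t < n"
proof -
  have b: "basic n (st t)" and ne: "stS (st t) \<noteq> {0..n+1}" and I: "Inv t"
    using perf_basic[OF assms] by auto
  have "stS (st t) \<subset> {0..n+1}" using b ne unfolding basic_def by auto
  then have "card (stS (st t)) < card {0..n+1}" by (intro psubset_card_mono) auto
  then show ?thesis using I unfolding Inv_def by simp
qed

lemma S_mono: "t \<le> t' \<Longrightarrow> stS (st t) \<subseteq> stS (st t')"
proof (induction t' rule: dec_induct)
  case base then show ?case by simp
next
  case (step m) then show ?case unfolding st_Suc step_S by auto
qed

lemma istar_in_next: "istar n (st t) \<in> stS (st (Suc t))"
  unfolding st_Suc step_S by simp

lemma upd_notin:
  assumes "performed n q z K u" "upd u i"
  shows "i \<notin> stS (st u)"
  using iLeft_facts(3)[OF perf_basic(1,2)[OF assms(1)]] assms(2) by force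

lemma istar_notin:
  assumes "performed n q z K u"
  shows "istar n (st u) \<in> {1..n} - stS (st u)"
  using istar_facts(1)[OF perf_basic(1,2)[OF assms(1)]] .

lemma istar_inj:
  assumes "performed n q z K a" "performed n q z K b" "istar n (st a) = istar n (st b)"
  shows "a = b"
proof (rule ccontr)
  assume "a \<noteq> b"
  then consider "a < b" | "b < a" by linarith
  then show False
  proof cases
    case 1
    then have "istar n (st a) \<in> stS (st b)" using S_mono[of "Suc a" b] istar_in_next[of a] by auto
    then show False using istar_notin[OF assms(2)] assms(3) by auto
  next
    case 2
    then have "istar n (st b) \<in> stS (st a)" using S_mono[of "Suc b" a] istar_in_next[of b] by auto
    then show False using istar_notin[OF assms(1)] assms(3) by auto
  qed
qed

lemma c_mono:
  assumes "performed n q z K u" "k \<le> u"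
  shows "c k \<le> c u"
proof (cases "k = u")
  case True then show ?thesis by simp
next
  case False
  then have "k < u" using assms by simp
  then show ?thesis using Inv_at(3)[OF perf_basic(3)[OF assms(1)] istar_notin[OF assms(1)]] by blast
qed

lemma upd_iters_fin: "finite (upd_iters n q z K i)"
proof -
  have "upd_iters n q z K i \<subseteq> {..<n}" unfolding upd_iters_def using perf_bound by auto
  then show ?thesis using finite_subset by blast
qed

lemma blocker_gt:
  assumes "i \<le> n"
  shows "i < blocker n q z K i"
proof (cases "upd_iters n q z K i = {}")
  case True then show ?thesis using assms unfolding blocker_def by simp
next
  case False
  then have "Max (upd_iters n q z K i) \<in> upd_iters n q z K i" using upd_iters_fin Max_in by blast
  then show ?thesis unfolding blocker_def if_not_P[OF False] unfolding upd_iters_def by blast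
qed

lemma blocker_eq:
  assumes r: "reach t" and i: "i \<in> {1..n} - stS (st t)"
    and nu: "\<forall>u. performed n q z K u \<and> t \<le> u \<longrightarrow> \<not> upd u i"
  shows "blocker n q z K i = Rn (st t) i"
proof -
  have "upd_iters n q z K i = U t i"
  proof
    show "upd_iters n q z K i \<subseteq> U t i" unfolding upd_iters_def U_def using nu by force
    show "U t i \<subseteq> upd_iters n q z K i" unfolding upd_iters_def U_def
      using r reach_mono perf_reach by (auto simp: Suc_le_eq)
  qed
  then have "blocker n q z K i = Bt t i" unfolding blocker_def Bt_def by simp
  also have "\<dots> = Rn (st t) i" using Inv_at(2)[OF Inv_all[OF r] i] by simp
  finally show ?thesis .
qed

lemma step_lemma:
  assumes j1: "j1 \<in> {1..n}" and bn: "blocker n q z K j1 \<le> n"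
  shows "\<exists>u. performed n q z K u \<and> istar n (st u) = blocker n q z K j1 \<and> j1 < blocker n q z K j1
     \<and> c u < avg z j1 (blocker n q z K j1)
     \<and> (\<forall>\<tau>. performed n q z K \<tau> \<and> istar n (st \<tau>) = j1 \<longrightarrow> u < \<tau>)"
proof -
  have ne: "upd_iters n q z K j1 \<noteq> {}" using bn unfolding blocker_def by (auto split: if_splits)
  define u where "u = Max (upd_iters n q z K j1)"
  have "u \<in> upd_iters n q z K j1" unfolding u_def using upd_iters_fin Max_in ne by blast
  then have pu: "performed n q z K u" and uu: "upd u j1" unfolding upd_iters_def by auto
  have bj: "blocker n q z K j1 = istar n (st u)" using ne unfolding blocker_def u_def by simp
  define s where "s = st u"
  have b: "basic n s" and nes: "stS s \<noteq> {0..n+1}" and I: "Inv u"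
    using perf_basic[OF pu] unfolding s_def by auto
  have j1n: "j1 \<notin> stS s" using upd_notin[OF pu uu] unfolding s_def .
  have u1: "iLeft n s < j1" "j1 < istar n s" using uu unfolding s_def by auto
  have lt: "stY s (istar n s) < stY s j1" using istar_facts(3)[OF b nes] j1 j1n u1 by auto
  have y1: "stY s j1 = avg z j1 (iRight n s)"
    using Inv_at(1)[OF I, of j1] j1 j1n Rn_mid[OF b nes u1] unfolding s_def by simp
  have y2: "stY s (istar n s) = avg z (istar n s) (iRight n s)"
    using Inv_at(1)[OF I istar_notin[OF pu]] iRight_facts(4)[OF b nes] unfolding s_def by simp
  have "avg z j1 (istar n s) > avg z (istar n s) (iRight n s)"
    using avg_left_gt[OF u1(2) iRight_facts(2)[OF b nes]] lt y1 y2 by simp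
  then have cu: "c u < avg z j1 (blocker n q z K j1)" using y2 bj unfolding s_def by simp
  have tau: "u < \<tau>" if "performed n q z K \<tau>" "istar n (st \<tau>) = j1" for \<tau>
  proof (rule ccontr)
    assume "\<not> u < \<tau>"
    moreover have "\<tau> \<noteq> u" using that u1 unfolding s_def by auto
    ultimately have "\<tau> < u" by simp
    then have "j1 \<in> stS (st u)" using S_mono[of "Suc \<tau>" u] istar_in_next[of \<tau>] that by auto
    then show False using j1n unfolding s_def by simp
  qed
  show ?thesis using pu bj u1 cu tau unfolding s_def by auto
qed

end


context alg
begin

lemma main:
  assumes pk: "performed n q z K k"
    and m1: "m \<ge> 1"
    and j: "j \<in> {1..n}"
    and chain: "\<forall>l<m. (blocker n q z K ^^ l) j \<le> n"
    and ist: "istar n (st k) = (blocker n q z K ^^ m) j"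
  shows "avg z j (blocker n q z K (istar n (st k))) < avg z j (istar n (st k))"
proof -
  define b where "b = blocker n q z K"
  define jl where "jl l = (b ^^ l) j" for l
  define ist0 where "ist0 = istar n (st k)"
  have jlS: "jl (Suc l) = b (jl l)" for l unfolding jl_def by simp
  have ism: "jl m = ist0" unfolding jl_def ist0_def b_def using ist by simp
  have isn: "ist0 \<in> {1..n} - stS (st k)" unfolding ist0_def using istar_notin[OF pk] .
  have jle: "jl l \<le> n" if "l \<le> m" for l
    using chain that ism isn unfolding jl_def b_def by (cases "l = m") auto
  have jge: "j \<le> jl l" if "l \<le> m" for l
    using that
  proof (induction l)
    case 0 then show ?case unfolding jl_def by simp
  next
    case (Suc l)
    have "jl l < jl (Suc l)" unfolding jlS b_def using blocker_gt jle Suc.prems by simp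
    then show ?case using Suc by simp
  qed
  have jin: "jl l \<in> {1..n}" if "l \<le> m" for l using jle[OF that] jge[OF that] j by auto
  define H where "H l \<longleftrightarrow> (\<forall>\<tau>. performed n q z K \<tau> \<and> istar n (st \<tau>) = jl (Suc l) \<longrightarrow> k \<le> \<tau>)
      \<and> c k < avg z (jl l) ist0 \<and> jl l < ist0" for l
  have HH: "d < m \<longrightarrow> H (m - 1 - d)" for d
  proof (induction d)
    case 0
    show ?case
    proof
      assume "0 < m"
      define l where "l = m - 1"
      have sl: "Suc l = m" using m1 unfolding l_def by simp
      have bl: "b (jl l) \<le> n" using jle[of m] sl jlS[of l] by simp
      obtain u where u: "performed n q z K u" "istar n (st u) = b (jl l)" "jl l < b (jl l)"
        "c u < avg z (jl l) (b (jl l))"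
        using step_lemma[OF jin[of l] bl[unfolded b_def]] sl unfolding b_def by auto
      have "u = k" using istar_inj[OF u(1) pk] u(2) jlS[of l] sl ism unfolding ist0_def by simp
      have p1: "\<forall>\<tau>. performed n q z K \<tau> \<and> istar n (st \<tau>) = jl (Suc l) \<longrightarrow> k \<le> \<tau>"
        using istar_inj[OF _ pk] ism sl unfolding ist0_def by auto
      show "H (m - 1 - 0)" unfolding H_def l_def[symmetric]
        using p1 u \<open>u = k\<close> jlS[of l] sl ism by simp
    qed
  next
    case (Suc d)
    show ?case
    proof
      assume dm: "Suc d < m"
      define l' where "l' = m - 1 - d"
      define l where "l = m - 1 - Suc d"
      have sl: "Suc l = l'" "l' < m" using dm unfolding l_def l'_def by auto
      have IH: "H l'" using Suc.IH dm unfolding l'_def by simp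
      have bl': "b (jl l') \<le> n" using jle[of "Suc l'"] sl jlS[of l'] by simp
      obtain u where u: "performed n q z K u" "istar n (st u) = b (jl l')"
        "\<forall>\<tau>. performed n q z K \<tau> \<and> istar n (st \<tau>) = jl l' \<longrightarrow> u < \<tau>"
        using step_lemma[OF jin[of l'] bl'[unfolded b_def]] sl unfolding b_def by auto
      have ku: "k \<le> u" using IH u(1,2) jlS[of l'] unfolding H_def by simp
      have p1: "\<forall>\<tau>. performed n q z K \<tau> \<and> istar n (st \<tau>) = jl (Suc l) \<longrightarrow> k \<le> \<tau>"
        using u(3) ku sl by force
      have bl: "b (jl l) \<le> n" using jle[of l'] sl jlS[of l] by simp
      obtain u' where u': "performed n q z K u'" "istar n (st u') = b (jl l)" "jl l < b (jl l)"
        "c u' < avg z (jl l) (b (jl l))"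
        using step_lemma[OF jin[of l] bl[unfolded b_def]] sl unfolding b_def by auto
      have ku': "k \<le> u'" using p1 u'(1,2) jlS[of l] by simp
      have c1: "c k < avg z (jl l) (jl l')" using c_mono[OF u'(1) ku'] u'(4) jlS[of l] sl by simp
      have c2: "c k < avg z (jl l') ist0" "jl l' < ist0" using IH unfolding H_def by auto
      have lt: "jl l < jl l'" using u'(3) jlS[of l] sl by simp
      have "c k < avg z (jl l) ist0" using avg_mix_gt[OF lt c2(2) c1 c2(1)] .
      then show "H (m - 1 - Suc d)" unfolding H_def l_def[symmetric] using p1 lt c2(2) by simp
    qed
  qed
  have H0: "H 0" using HH[of "m - 1"] m1 by simp
  then have h0: "c k < avg z j ist0" "j < ist0" unfolding H_def jl_def by auto
  have nu: "\<forall>u. performed n q z K u \<and> k \<le> u \<longrightarrow> \<not> upd u ist0"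
  proof (intro allI impI)
    fix u assume a: "performed n q z K u \<and> k \<le> u"
    show "\<not> upd u ist0"
    proof (cases "u = k")
      case True then show ?thesis unfolding ist0_def by simp
    next
      case False
      then have "ist0 \<in> stS (st u)" using a S_mono[of "Suc k" u] istar_in_next[of k] unfolding ist0_def by auto
      then show ?thesis using upd_notin a by blast
    qed
  qed
  have rk: "reach k" using pk perf_reach reach_mono by (meson le_SucI order_refl)
  have bis: "b ist0 = iRight n (st k)"
    using blocker_eq[OF rk isn nu] iRight_facts(4)[OF perf_basic(1,2)[OF pk]] unfolding b_def ist0_def by simp
  have ck: "c k = avg z ist0 (iRight n (st k))"
    using Inv_at(1)[OF perf_basic(3)[OF pk] isn] iRight_facts(4)[OF perf_basic(1,2)[OF pk]]
    unfolding ist0_def by simp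
  have ir: "ist0 < iRight n (st k)" using iRight_facts(2)[OF perf_basic(1,2)[OF pk]] unfolding ist0_def .
  have "avg z j (iRight n (st k)) < avg z j ist0"
    using avg_right_lt[OF h0(2) ir] h0(1) ck by simp
  then show ?thesis using bis unfolding b_def ist0_def by simp
qed

end

theorem corollary1:
  fixes n :: nat and q z :: "nat \<Rightarrow> real" and K :: real and k m j :: nat
  assumes "n \<ge> 1"
    and "0 < q 1"
    and "\<And>i. 1 \<le> i \<Longrightarrow> i < n \<Longrightarrow> q i \<le> q (i + 1)"
    and "\<And>i. 1 \<le> i \<Longrightarrow> i \<le> n \<Longrightarrow> z i > 0"
    and "K > 0"
    and "performed n q z K k"
    and "m \<ge> 1"
    and "j \<in> {1..n}"
    and "\<forall>l<m. (blocker n q z K ^^ l) j \<le> n"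
    and "istar n (alg_st n q z K k) = (blocker n q z K ^^ m) j"
  shows "avg z j (blocker n q z K (istar n (alg_st n q z K k)))
           < avg z j (istar n (alg_st n q z K k))"
  using alg.main[of n q z K k m j] assms(6-10) by blast

end
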